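(* Let $r\ge 1$ and let $q_1\le\cdots\le q_r$ be positive even integers. Let $G=\Theta_{1,q_1,\ldots,q_r}$. If $p\ge\max\{4,\Delta(G)\}$, then $G$ is strongly $p$-edge-orientable.
   Context: For positive integers $p_1,\ldots,p_k$, the $\Theta$-graph $\Theta_{p_1,\ldots,p_k}$ is the graph obtained from two vertices $x_1,x_2$ joined by $k$ internally disjoint paths, the $i$th path having $p_i$ edges. A path with $1$ edge is the edge $x_1x_2$. An orientation of a graph $H$ is any digraph obtained by replacing each edge $uv$ with the arc $(u,v)$, with the arc $(v,u)$, or with both arcs. A kernel of a digraph $D$ is an independent set $S$ such that every vertex of $D-S$ has an out-neighbor in $S$. $D$ is kernel-perfect if every induced subdigraph of $D$ has a kernel. For $f:V(H)\to\mathbb{N}$, an orientation $D$ of $H$ is $f$-kernel-perfect if it is kernel-perfect and $f(v)\ge 1+d^+_D(v)$ for all $v$. For $f:E(G)\to\mathbb{N}$, $G$ is $f$-edge-orientable if its line graph $L(G)$ admits an $f$-kernel-perfect orientation. For $v\in V(G)$, define $f_{k,v}:E(G)\to\mathbb{N}$ by $f_{k,v}(e)=d_G(v)$ if $e$ is incident to $v$, and $f_{k,v}(e)=k$ otherwise. $G$ is strongly $k$-edge-orientable if $G$ is $f_{k,v}$-edge-orientable for every $v\in V(G)$. *)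

theory Defs
  imports Main
begin

definition orientation :: "'a set \<Rightarrow> ('a \<Rightarrow> 'a \<Rightarrow> bool) \<Rightarrow> ('a \<times> 'a) set \<Rightarrow> bool" where
  "orientation V adj A \<longleftrightarrow>
     A \<subseteq> {(u, v). u \<in> V \<and> v \<in> V \<and> adj u v} \<and>
     (\<forall>u\<in>V. \<forall>v\<in>V. adj u v \<longrightarrow> (u, v) \<in> A \<or> (v, u) \<in> A)"

definition is_kernel :: "('a \<times> 'a) set \<Rightarrow> 'a set \<Rightarrow> 'a set \<Rightarrow> bool" where
  "is_kernel A S K \<longleftrightarrow>
     K \<subseteq> S \<and> (\<forall>u\<in>K. \<forall>v\<in>K. (u, v) \<notin> A) \<and>
     (\<forall>v\<in>S - K. \<exists>w\<in>K. (v, w) \<in> A)"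

definition kernel_perfect :: "'a set \<Rightarrow> ('a \<times> 'a) set \<Rightarrow> bool" where
  "kernel_perfect V A \<longleftrightarrow> (\<forall>S. S \<subseteq> V \<longrightarrow> (\<exists>K. is_kernel A S K))"

definition out_degree :: "('a \<times> 'a) set \<Rightarrow> 'a \<Rightarrow> nat" where
  "out_degree A v = card {w. (v, w) \<in> A}"

definition f_kernel_perfect_orientation ::
  "'a set \<Rightarrow> ('a \<Rightarrow> 'a \<Rightarrow> bool) \<Rightarrow> ('a \<Rightarrow> nat) \<Rightarrow> ('a \<times> 'a) set \<Rightarrow> bool" where
  "f_kernel_perfect_orientation V adj f A \<longleftrightarrow>
     orientation V adj A \<and> kernel_perfect V A \<and> (\<forall>v\<in>V. f v \<ge> 1 + out_degree A v)"

definition line_adj :: "'a set \<Rightarrow> 'a set \<Rightarrow> bool" where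
  "line_adj e e' \<longleftrightarrow> e \<noteq> e' \<and> e \<inter> e' \<noteq> {}"

definition f_edge_orientable :: "'a set set \<Rightarrow> ('a set \<Rightarrow> nat) \<Rightarrow> bool" where
  "f_edge_orientable E f \<longleftrightarrow> (\<exists>A. f_kernel_perfect_orientation E line_adj f A)"

definition degree :: "'a set set \<Rightarrow> 'a \<Rightarrow> nat" where
  "degree E v = card {e \<in> E. v \<in> e}"

definition max_degree :: "'a set \<Rightarrow> 'a set set \<Rightarrow> nat" where
  "max_degree V E = Max (degree E ` V)"

definition f_kv :: "'a set set \<Rightarrow> nat \<Rightarrow> 'a \<Rightarrow> 'a set \<Rightarrow> nat" where
  "f_kv E k v e = (if v \<in> e then degree E v else k)"

definition strongly_edge_orientable :: "'a set \<Rightarrow> 'a set set \<Rightarrow> nat \<Rightarrow> bool" where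
  "strongly_edge_orientable V E k \<longleftrightarrow> (\<forall>v\<in>V. f_edge_orientable E (f_kv E k v))"

(* Theta graph Theta_{p_1,...,p_k} with ps = [p_1,...,p_k] (0-indexed paths).
   x1 = (0,0), x2 = (0,1); j-th vertex of path i (0 < j < p_i) is (Suc i, j). *)
definition theta_vertex :: "nat list \<Rightarrow> nat \<Rightarrow> nat \<Rightarrow> nat \<times> nat" where
  "theta_vertex ps i j = (if j = 0 then (0, 0) else if j = ps ! i then (0, 1) else (Suc i, j))"

definition theta_vertices :: "nat list \<Rightarrow> (nat \<times> nat) set" where
  "theta_vertices ps = {(0, 0), (0, 1)} \<union>
     {theta_vertex ps i j | i j. i < length ps \<and> j \<le> ps ! i}"

definition theta_edges :: "nat list \<Rightarrow> (nat \<times> nat) set set" where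
  "theta_edges ps = {{theta_vertex ps i j, theta_vertex ps i (Suc j)} | i j. i < length ps \<and> j < ps ! i}"

end

theory Submission
  imports Defs
begin



definition semik :: "('a \<times> 'a) set \<Rightarrow> 'a set \<Rightarrow> 'a set \<Rightarrow> bool" where
  "semik A S J \<longleftrightarrow> J \<subseteq> S \<and> J \<noteq> {} \<and> (\<forall>u\<in>J. \<forall>v\<in>J. (u, v) \<notin> A) \<and>
     (\<forall>u\<in>J. \<forall>w\<in>S - J. (u, w) \<in> A \<longrightarrow> (\<exists>z\<in>J. (w, z) \<in> A))"

lemma kernel_from_semik:
  assumes fin: "finite S"
    and sk: "\<And>T. T \<subseteq> S \<Longrightarrow> T \<noteq> {} \<Longrightarrow> \<exists>J. semik A T J"
  shows "\<exists>K. is_kernel A S K"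
  using fin sk
proof (induction "card S" arbitrary: S rule: less_induct)
  case less
  show ?case
  proof (cases "S = {}")
    case True
    then show ?thesis unfolding is_kernel_def by auto
  next
    case False
    then obtain J where J: "semik A S J" using less.prems(2)[of S] by auto
    define S' where "S' = S - J - {w\<in>S. \<exists>z\<in>J. (w, z) \<in> A}"
    have "S' \<subseteq> S" unfolding S'_def by auto
    moreover have "S' \<noteq> S" using J unfolding semik_def S'_def by auto
    ultimately have lt: "card S' < card S" using less.prems(1)
      by (meson psubsetI psubset_card_mono)
    have "\<exists>K. is_kernel A S' K"
      apply (rule less.hyps[OF lt])
      using \<open>S' \<subseteq> S\<close> less.prems by (auto intro: finite_subset)
    then obtain K' where K': "is_kernel A S' K'" by auto
    have "is_kernel A S (J \<union> K')"
      using J K' unfolding is_kernel_def semik_def S'_def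
      by (auto; blast)
    then show ?thesis by blast
  qed
qed

lemma levels_kernel_perfect:
  fixes lv :: "'a \<Rightarrow> nat" and pa :: "'a \<Rightarrow> bool"
  assumes fin: "finite V"
    and lvp: "\<And>x y. (x, y) \<in> A \<Longrightarrow> lv y < lv x \<or> (lv y = lv x \<and> pa y \<noteq> pa x)"
  shows "kernel_perfect V A"
  unfolding kernel_perfect_def
proof (intro allI impI)
  fix S assume SV: "S \<subseteq> V"
  show "\<exists>K. is_kernel A S K"
  proof (rule kernel_from_semik)
    show "finite S" using SV fin by (rule finite_subset)
  next
    fix T assume TS: "T \<subseteq> S" and Tne: "T \<noteq> {}"
    have finT: "finite T" using TS SV fin by (meson finite_subset)
    define l0 where "l0 = Min (lv ` T)"
    have l0le: "\<And>x. x \<in> T \<Longrightarrow> l0 \<le> lv x" unfolding l0_def using finT by auto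
    obtain x0 where x0: "x0 \<in> T" "lv x0 = l0" unfolding l0_def using finT Tne
      by (metis (mono_tags, lifting) Min_in empty_is_image finite_imageI imageE)
    define M where "M = {x\<in>T. lv x = l0}"
    have arcM: "\<And>u w. u \<in> M \<Longrightarrow> w \<in> T \<Longrightarrow> (u, w) \<in> A \<Longrightarrow> w \<in> M \<and> pa w \<noteq> pa u"
    proof -
      fix u w assume "u \<in> M" "w \<in> T" "(u, w) \<in> A"
      then show "w \<in> M \<and> pa w \<noteq> pa u" using lvp[of u w] l0le[of w] unfolding M_def by auto
    qed
    show "\<exists>J. semik A T J"
    proof (cases "\<exists>x\<in>M. \<forall>w\<in>T. (x, w) \<notin> A")
      case True
      then obtain x where "x \<in> M" "\<forall>w\<in>T. (x, w) \<notin> A" by auto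
      then have "semik A T {x}" unfolding semik_def M_def by auto
      then show ?thesis by blast
    next
      case False
      define J where "J = {x\<in>M. pa x = pa x0}"
      have "x0 \<in> M" using x0 unfolding M_def by auto
      have "semik A T J"
        unfolding semik_def
      proof (intro conjI ballI impI)
        show "J \<subseteq> T" unfolding J_def M_def by auto
        show "J \<noteq> {}" using \<open>x0 \<in> M\<close> unfolding J_def by auto
      next
        fix u v assume "u \<in> J" "v \<in> J"
        then show "(u, v) \<notin> A" using arcM[of u v] unfolding J_def M_def by auto
      next
        fix u w assume u: "u \<in> J" and w: "w \<in> T - J" and uw: "(u, w) \<in> A"
        have wM: "w \<in> M" "pa w \<noteq> pa u" using arcM[of u w] u w uw unfolding J_def by auto
        then obtain z where z: "z \<in> T" "(w, z) \<in> A" using False by auto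
        have "z \<in> M" "pa z \<noteq> pa w" using arcM[OF wM(1) z] by auto
        then have "z \<in> J" using wM u unfolding J_def by auto
        then show "\<exists>z\<in>J. (w, z) \<in> A" using z by auto
      qed
      then show ?thesis by blast
    qed
  qed
qed




lemma transport:
  assumes inj: "inj_on g V"
    and adj: "\<And>x y. x \<in> V \<Longrightarrow> y \<in> V \<Longrightarrow> adj' (g x) (g y) = adj x y"
    and ff: "\<And>x. x \<in> V \<Longrightarrow> f' (g x) = f x"
    and fin: "finite V"
    and H: "f_kernel_perfect_orientation V adj f B"
  shows "f_kernel_perfect_orientation (g ` V) adj' f' (map_prod g g ` B)"
proof -
  have BV: "B \<subseteq> V \<times> V" and tot: "\<forall>u\<in>V. \<forall>v\<in>V. adj u v \<longrightarrow> (u, v) \<in> B \<or> (v, u) \<in> B"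
    and Badj: "\<And>u v. (u,v) \<in> B \<Longrightarrow> adj u v"
    using H unfolding f_kernel_perfect_orientation_def orientation_def by auto
  have kp: "kernel_perfect V B" and deg: "\<forall>v\<in>V. f v \<ge> 1 + out_degree B v"
    using H unfolding f_kernel_perfect_orientation_def by auto
  let ?B = "map_prod g g ` B"
  have memB: "\<And>x y. x \<in> V \<Longrightarrow> y \<in> V \<Longrightarrow> ((g x, g y) \<in> ?B) = ((x, y) \<in> B)"
  proof
    fix x y assume xy: "x \<in> V" "y \<in> V" "(g x, g y) \<in> ?B"
    then obtain a b where "(a,b) \<in> B" "g a = g x" "g b = g y" by auto
    moreover then have "a \<in> V" "b \<in> V" using BV by auto
    ultimately show "(x,y) \<in> B" using inj xy unfolding inj_on_def by metis
  qed auto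
  have ori: "orientation (g ` V) adj' ?B"
    unfolding orientation_def
  proof (intro conjI)
    show "?B \<subseteq> {(u, v). u \<in> g ` V \<and> v \<in> g ` V \<and> adj' u v}"
    proof
      fix z assume "z \<in> ?B"
      then obtain a b where ab: "(a,b) \<in> B" "z = (g a, g b)" by auto
      then have "a \<in> V" "b \<in> V" using BV by auto
      then show "z \<in> {(u, v). u \<in> g ` V \<and> v \<in> g ` V \<and> adj' u v}"
        using ab Badj adj by auto
    qed
    show "\<forall>u\<in>g ` V. \<forall>v\<in>g ` V. adj' u v \<longrightarrow> (u, v) \<in> ?B \<or> (v, u) \<in> ?B"
      using tot adj memB by auto
  qed
  have kp': "kernel_perfect (g ` V) ?B"
    unfolding kernel_perfect_def
  proof (intro allI impI)
    fix S' assume S': "S' \<subseteq> g ` V"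
    define S where "S = {x\<in>V. g x \<in> S'}"
    have SV: "S \<subseteq> V" unfolding S_def by auto
    have S'eq: "S' = g ` S" using S' unfolding S_def by auto
    obtain K where K: "is_kernel B S K" using kp SV unfolding kernel_perfect_def by auto
    have KS: "K \<subseteq> S" using K unfolding is_kernel_def by auto
    have "is_kernel ?B S' (g ` K)"
      unfolding is_kernel_def
    proof (intro conjI ballI)
      show "g ` K \<subseteq> S'" using KS S'eq by auto
    next
      fix u v assume "u \<in> g ` K" "v \<in> g ` K"
      then obtain a b where "a \<in> K" "b \<in> K" "u = g a" "v = g b" by auto
      moreover have "a \<in> V" "b \<in> V" using \<open>a \<in> K\<close> \<open>b \<in> K\<close> KS SV by auto
      ultimately show "(u, v) \<notin> ?B" using K memB[of a b] unfolding is_kernel_def by auto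
    next
      fix v assume v: "v \<in> S' - g ` K"
      then obtain a where a: "a \<in> S" "v = g a" using S'eq by auto
      then have "a \<in> S - K" using v by auto
      then obtain w where "w \<in> K" "(a, w) \<in> B" using K unfolding is_kernel_def by blast
      then show "\<exists>w\<in>g ` K. (v, w) \<in> ?B" using a by auto
    qed
    then show "\<exists>K. is_kernel ?B S' K" by blast
  qed
  have od: "\<And>x. x \<in> V \<Longrightarrow> out_degree ?B (g x) = out_degree B x"
  proof -
    fix x assume x: "x \<in> V"
    have "{w. (g x, w) \<in> ?B} = g ` {w. (x, w) \<in> B}"
    proof
      show "{w. (g x, w) \<in> ?B} \<subseteq> g ` {w. (x, w) \<in> B}"
      proof
        fix w assume "w \<in> {w. (g x, w) \<in> ?B}"
        then obtain a b where ab: "(a,b) \<in> B" "g a = g x" "g b = w" by auto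
        then have "a \<in> V" using BV by auto
        then have "a = x" using inj x ab unfolding inj_on_def by metis
        then show "w \<in> g ` {w. (x, w) \<in> B}" using ab by auto
      qed
    qed auto
    moreover have "inj_on g {w. (x, w) \<in> B}" using inj BV by (auto intro: inj_on_subset)
    ultimately show "out_degree ?B (g x) = out_degree B x"
      unfolding out_degree_def by (simp add: card_image)
  qed
  show ?thesis
    unfolding f_kernel_perfect_orientation_def
    using ori kp' deg od ff by auto
qed




definition good :: "nat list \<Rightarrow> bool" where
  "good ps \<longleftrightarrow> ps \<noteq> [] \<and> ps ! 0 = 1 \<and> (\<forall>i. 0 < i \<and> i < length ps \<longrightarrow> 2 \<le> ps ! i)"

definition Ix :: "nat list \<Rightarrow> (nat \<times> nat) set" where
  "Ix ps = {(i, j). i < length ps \<and> j < ps ! i}"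

definition edg :: "nat list \<Rightarrow> nat \<times> nat \<Rightarrow> (nat \<times> nat) set" where
  "edg ps x = {theta_vertex ps (fst x) (snd x), theta_vertex ps (fst x) (Suc (snd x))}"

definition iadj :: "nat list \<Rightarrow> nat \<times> nat \<Rightarrow> nat \<times> nat \<Rightarrow> bool" where
  "iadj ps x y \<longleftrightarrow> x \<noteq> y \<and> ((snd x = 0 \<and> snd y = 0) \<or>
     (Suc (snd x) = ps ! fst x \<and> Suc (snd y) = ps ! fst y) \<or>
     (fst x = fst y \<and> (Suc (snd x) = snd y \<or> Suc (snd y) = snd x)))"

lemma good_pos: "good ps \<Longrightarrow> i < length ps \<Longrightarrow> 1 \<le> ps ! i"
  unfolding good_def by (cases "i = 0") auto

lemma good_one: "good ps \<Longrightarrow> i < length ps \<Longrightarrow> ps ! i = 1 \<Longrightarrow> i = 0"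
  unfolding good_def by (metis gr0I numeral_le_one_iff semiring_norm(69))

lemma tv_eq:
  assumes "good ps" "i < length ps" "j \<le> ps ! i" "i' < length ps" "j' \<le> ps ! i'"
  shows "theta_vertex ps i j = theta_vertex ps i' j' \<longleftrightarrow>
    (j = 0 \<and> j' = 0) \<or> (j = ps ! i \<and> j' = ps ! i') \<or> (i = i' \<and> j = j')"
  using good_pos[OF assms(1,2)] good_pos[OF assms(1,4)] assms(3,5)
  unfolding theta_vertex_def by auto

lemma edges_eq: "theta_edges ps = edg ps ` Ix ps"
  unfolding theta_edges_def edg_def Ix_def
  apply (intro equalityI subsetI)
   apply clarify
   apply (rule_tac x="(i,j)" in image_eqI)
  by auto blast

lemma edg_inj: assumes "good ps" shows "inj_on (edg ps) (Ix ps)"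
proof (rule inj_onI)
  fix x y assume x: "x \<in> Ix ps" and y: "y \<in> Ix ps" and e: "edg ps x = edg ps y"
  obtain i j i' j' where xy: "x = (i,j)" "y = (i', j')" by (cases x, cases y)
  have h: "i < length ps" "j < ps ! i" "i' < length ps" "j' < ps ! i'" using x y xy unfolding Ix_def by auto
  note T = tv_eq[OF assms]
  have "(theta_vertex ps i j = theta_vertex ps i' j' \<and> theta_vertex ps i (Suc j) = theta_vertex ps i' (Suc j'))
     \<or> (theta_vertex ps i j = theta_vertex ps i' (Suc j') \<and> theta_vertex ps i (Suc j) = theta_vertex ps i' j')"
    using e unfolding edg_def xy by (auto simp: doubleton_eq_iff)
  then show "x = y"
  proof
    assume a: "theta_vertex ps i j = theta_vertex ps i' j' \<and> theta_vertex ps i (Suc j) = theta_vertex ps i' (Suc j')"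
    have e1: "(j = 0 \<and> j' = 0) \<or> (i = i' \<and> j = j')" using a T[of i j i' j'] h by auto
    have e2: "(Suc j = ps ! i \<and> Suc j' = ps ! i') \<or> (i = i' \<and> j = j')" using a T[of i "Suc j" i' "Suc j'"] h by auto
    show "x = y" using e1 e2 good_one[OF assms, of i] good_one[OF assms, of i'] h xy by auto
  next
    assume a: "theta_vertex ps i j = theta_vertex ps i' (Suc j') \<and> theta_vertex ps i (Suc j) = theta_vertex ps i' j'"
    have e1: "i = i' \<and> j = Suc j'" using a T[of i j i' "Suc j'"] h by auto
    have e2: "(Suc j = ps ! i \<and> j' = ps ! i') \<or> (i = i' \<and> Suc j = j')" using a T[of i "Suc j" i' j'] h by auto
    show "x = y" using e1 e2 h by auto
  qed
qed

lemma edg_adj: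
  assumes g: "good ps" and x: "x \<in> Ix ps" and y: "y \<in> Ix ps"
  shows "line_adj (edg ps x) (edg ps y) = iadj ps x y"
proof -
  obtain i j i' j' where xy: "x = (i,j)" "y = (i', j')" by (cases x, cases y)
  have h: "i < length ps" "j < ps ! i" "i' < length ps" "j' < ps ! i'" using x y xy unfolding Ix_def by auto
  have ne: "(edg ps x \<noteq> edg ps y) = (x \<noteq> y)" using edg_inj[OF g] x y by (auto dest: inj_onD)
  note T = tv_eq[OF g]
  have "(edg ps x \<inter> edg ps y \<noteq> {}) =
    (theta_vertex ps i j = theta_vertex ps i' j' \<or> theta_vertex ps i j = theta_vertex ps i' (Suc j') \<or>
     theta_vertex ps i (Suc j) = theta_vertex ps i' j' \<or> theta_vertex ps i (Suc j) = theta_vertex ps i' (Suc j'))"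
    unfolding edg_def xy by auto
  also have "\<dots> = ((j = 0 \<and> j' = 0) \<or> (i = i' \<and> j = j') \<or> (i = i' \<and> j = Suc j') \<or> (i = i' \<and> Suc j = j')
      \<or> (Suc j = ps ! i \<and> Suc j' = ps ! i'))"
    using T[of i j i' j'] T[of i j i' "Suc j'"] T[of i "Suc j" i' j'] T[of i "Suc j" i' "Suc j'"] h
    by auto
  finally show ?thesis unfolding line_adj_def iadj_def ne using xy by auto
qed




lemma mem_x1:
  assumes g: "good ps" and x: "x \<in> Ix ps"
  shows "(0,0) \<in> edg ps x \<longleftrightarrow> snd x = 0"
proof -
  obtain i j where xy: "x = (i,j)" by (cases x)
  have h: "i < length ps" "j < ps ! i" using x xy unfolding Ix_def by auto
  have z: "(0,0) = theta_vertex ps i 0" unfolding theta_vertex_def by simp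
  show ?thesis unfolding edg_def xy z using tv_eq[OF g, of i j i 0] tv_eq[OF g, of i "Suc j" i 0] h by auto
qed

lemma mem_x2:
  assumes g: "good ps" and x: "x \<in> Ix ps"
  shows "(0,1) \<in> edg ps x \<longleftrightarrow> Suc (snd x) = ps ! fst x"
proof -
  obtain i j where xy: "x = (i,j)" by (cases x)
  have h: "i < length ps" "j < ps ! i" using x xy unfolding Ix_def by auto
  have "ps ! i \<noteq> 0" using good_pos[OF g h(1)] by auto
  then have z: "(0,1) = theta_vertex ps i (ps ! i)" unfolding theta_vertex_def by simp
  show ?thesis unfolding edg_def xy z using tv_eq[OF g, of i j i "ps!i"] tv_eq[OF g, of i "Suc j" i "ps!i"] h by auto
qed

lemma mem_int:
  assumes g: "good ps" and x: "x \<in> Ix ps" and i0: "i0 < length ps" "0 < j0" "j0 < ps ! i0"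
  shows "theta_vertex ps i0 j0 \<in> edg ps x \<longleftrightarrow> fst x = i0 \<and> (snd x = j0 \<or> Suc (snd x) = j0)"
proof -
  obtain i j where xy: "x = (i,j)" by (cases x)
  have h: "i < length ps" "j < ps ! i" using x xy unfolding Ix_def by auto
  show ?thesis unfolding edg_def xy using tv_eq[OF g, of i j i0 j0] tv_eq[OF g, of i "Suc j" i0 j0] h i0 by auto
qed

lemma degree_eq:
  assumes g: "good ps"
  shows "degree (theta_edges ps) v = card {x\<in>Ix ps. v \<in> edg ps x}"
proof -
  have "{e \<in> theta_edges ps. v \<in> e} = edg ps ` {x\<in>Ix ps. v \<in> edg ps x}"
    unfolding edges_eq by auto
  moreover have "inj_on (edg ps) {x\<in>Ix ps. v \<in> edg ps x}"
    using edg_inj[OF g] by (rule inj_on_subset) auto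
  ultimately show ?thesis unfolding degree_def by (simp add: card_image)
qed

lemma degree_x1:
  assumes g: "good ps"
  shows "degree (theta_edges ps) (0,0) = length ps"
proof -
  have "{x\<in>Ix ps. (0,0) \<in> edg ps x} = (\<lambda>i. (i,0)) ` {..<length ps}"
    using mem_x1[OF g] good_pos[OF g] unfolding Ix_def by force
  then show ?thesis unfolding degree_eq[OF g] by (simp add: card_image inj_on_def)
qed

lemma degree_x2:
  assumes g: "good ps"
  shows "degree (theta_edges ps) (0,1) = length ps"
proof -
  have "{x\<in>Ix ps. (0,1) \<in> edg ps x} = (\<lambda>i. (i, ps ! i - 1)) ` {..<length ps}"
  proof (intro equalityI subsetI)
    fix x assume "x \<in> {x\<in>Ix ps. (0,1) \<in> edg ps x}"
    then show "x \<in> (\<lambda>i. (i, ps ! i - 1)) ` {..<length ps}"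
      using mem_x2[OF g] unfolding Ix_def by (force simp: image_iff)
  next
    fix x assume "x \<in> (\<lambda>i. (i, ps ! i - 1)) ` {..<length ps}"
    then obtain i where "i < length ps" "x = (i, ps ! i - 1)" by auto
    then show "x \<in> {x\<in>Ix ps. (0,1) \<in> edg ps x}"
      using mem_x2[OF g, of x] good_pos[OF g, of i] unfolding Ix_def by auto
  qed
  then show ?thesis unfolding degree_eq[OF g] by (simp add: card_image inj_on_def)
qed

lemma degree_int:
  assumes g: "good ps" and i0: "i0 < length ps" "0 < j0" "j0 < ps ! i0"
  shows "degree (theta_edges ps) (theta_vertex ps i0 j0) = 2"
proof -
  have "{x\<in>Ix ps. theta_vertex ps i0 j0 \<in> edg ps x} = {(i0, j0 - 1), (i0, j0)}"
  proof (intro equalityI subsetI)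
    fix x assume "x \<in> {x\<in>Ix ps. theta_vertex ps i0 j0 \<in> edg ps x}"
    then show "x \<in> {(i0, j0 - 1), (i0, j0)}" using mem_int[OF g _ i0, of x] by (cases x) auto
  next
    fix x assume "x \<in> {(i0, j0 - 1), (i0, j0)}"
    then show "x \<in> {x\<in>Ix ps. theta_vertex ps i0 j0 \<in> edg ps x}"
      using mem_int[OF g _ i0, of x] i0 unfolding Ix_def by auto
  qed
  then show ?thesis unfolding degree_eq[OF g] using i0 by simp
qed

lemma vertex_cases:
  assumes g: "good ps" and v: "v \<in> theta_vertices ps"
  shows "v = (0,0) \<or> v = (0,1) \<or> (\<exists>i0 j0. i0 < length ps \<and> 0 < j0 \<and> j0 < ps ! i0 \<and> v = theta_vertex ps i0 j0)"
proof -
  have "v = (0,0) \<or> v = (0,1) \<or> (\<exists>i j. i < length ps \<and> j \<le> ps ! i \<and> v = theta_vertex ps i j)"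
    using v unfolding theta_vertices_def by auto
  moreover have "v = theta_vertex ps i j \<Longrightarrow> j \<le> ps ! i \<Longrightarrow> i < length ps \<Longrightarrow> ?thesis" for i j
  proof -
    assume a: "v = theta_vertex ps i j" "j \<le> ps ! i" "i < length ps"
    show ?thesis
    proof (cases "j = 0")
      case True then show ?thesis using a unfolding theta_vertex_def by simp
    next
      case False
      show ?thesis
      proof (cases "j = ps ! i")
        case True then show ?thesis using a False unfolding theta_vertex_def by simp
      next
        case F2: False
        then have "j < ps ! i" using a by auto
        then show ?thesis using a False by blast
      qed
    qed
  qed
  ultimately show ?thesis by blast
qed

lemma finite_V: "finite (theta_vertices ps)"
proof -
  have "{theta_vertex ps i j | i j. i < length ps \<and> j \<le> ps ! i} = (\<lambda>(i,j). theta_vertex ps i j) ` (SIGMA i:{..<length ps}. {..ps ! i})"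
    by auto
  then show ?thesis unfolding theta_vertices_def by auto
qed

lemma finite_Ix: "finite (Ix ps)"
proof -
  have "Ix ps = (SIGMA i:{..<length ps}. {..<ps ! i})" unfolding Ix_def by auto
  then show ?thesis by auto
qed

definition sig :: "nat list \<Rightarrow> nat \<times> nat \<Rightarrow> nat \<times> nat" where
  "sig ps x = (fst x, ps ! fst x - Suc (snd x))"

lemma sig_Ix: "x \<in> Ix ps \<Longrightarrow> sig ps x \<in> Ix ps"
  unfolding sig_def Ix_def by auto

lemma sig_sig: "x \<in> Ix ps \<Longrightarrow> sig ps (sig ps x) = x"
  unfolding sig_def Ix_def by auto

lemma sig_image: "sig ps ` Ix ps = Ix ps"
  using sig_Ix sig_sig by (metis (no_types, lifting) image_eqI image_subsetI subsetI subset_antisym)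

lemma sig_inj: "inj_on (sig ps) (Ix ps)"
  by (metis inj_on_def sig_sig)

lemma sig_adj: "x \<in> Ix ps \<Longrightarrow> y \<in> Ix ps \<Longrightarrow> iadj ps (sig ps x) (sig ps y) = iadj ps x y"
proof -
  obtain i j i' j' where xy: "x = (i,j)" "y = (i', j')" by (cases x, cases y)
  assume "x \<in> Ix ps" "y \<in> Ix ps"
  then have h: "j < ps ! i" "j' < ps ! i'" using xy unfolding Ix_def by auto
  have e1: "(ps ! i - Suc j = 0 \<and> ps ! i' - Suc j' = 0) = (Suc j = ps ! i \<and> Suc j' = ps ! i')" using h by auto
  have e2: "(Suc (ps ! i - Suc j) = ps ! i \<and> Suc (ps ! i' - Suc j') = ps ! i') = (j = 0 \<and> j' = 0)" using h by auto
  have e3: "(i = i' \<and> (Suc (ps ! i - Suc j) = ps ! i' - Suc j' \<or> Suc (ps ! i' - Suc j') = ps ! i - Suc j))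
     = (i = i' \<and> (Suc j = j' \<or> Suc j' = j))" using h by auto
  have e4: "((i, ps ! i - Suc j) \<noteq> (i', ps ! i' - Suc j')) = ((i,j) \<noteq> (i',j'))" using h by auto
  show ?thesis unfolding sig_def iadj_def xy fst_conv snd_conv e4
    using e1 e2 e3 by blast
qed




definition mm :: "nat list \<Rightarrow> nat \<Rightarrow> nat" where
  "mm ps i0 = (if i0 < length ps then length ps - 2 else length ps - 1)"
definition pos :: "nat \<Rightarrow> nat \<Rightarrow> nat" where
  "pos i0 i = (if i < i0 then i else i - 1)"
definition KK :: "nat list \<Rightarrow> nat \<Rightarrow> nat" where
  "KK ps i0 = max 1 (mm ps i0 - 1)"
definition tp :: "nat list \<Rightarrow> nat \<Rightarrow> nat \<Rightarrow> bool" where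
  "tp ps i0 i \<longleftrightarrow> pos i0 i = mm ps i0 \<and> 2 \<le> mm ps i0"
definition isab :: "nat list \<Rightarrow> nat \<times> nat \<Rightarrow> bool" where
  "isab ps x \<longleftrightarrow> fst x \<noteq> 0 \<and> (snd x = 0 \<or> Suc (snd x) = ps ! fst x)"
definition lvl :: "nat list \<Rightarrow> nat \<Rightarrow> (nat \<times> nat) set \<Rightarrow> nat \<times> nat \<Rightarrow> nat" where
  "lvl ps i0 U x = (if x \<in> U then 0 else if fst x = 0 then 1 else if isab ps x then
      (if fst x = i0 then 2 else 2 + min (pos i0 (fst x)) (KK ps i0)) else length ps + 10)"
definition par :: "nat list \<Rightarrow> nat \<Rightarrow> (nat \<times> nat) set \<Rightarrow> nat \<times> nat \<Rightarrow> bool" where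
  "par ps i0 U x = (if x \<in> U then odd (snd x) else if isab ps x then ((snd x = 0) = tp ps i0 (fst x))
      else odd (snd x))"
definition shareX :: "nat list \<Rightarrow> nat \<times> nat \<Rightarrow> nat \<times> nat \<Rightarrow> bool" where
  "shareX ps x y \<longleftrightarrow> (snd x = 0 \<and> snd y = 0) \<or> (Suc (snd x) = ps ! fst x \<and> Suc (snd y) = ps ! fst y)"
definition Bs :: "nat list \<Rightarrow> nat \<Rightarrow> (nat \<times> nat) set \<Rightarrow> ((nat \<times> nat) \<times> (nat \<times> nat)) set" where
  "Bs ps i0 U = {(x, y). x \<in> Ix ps \<and> y \<in> Ix ps \<and> iadj ps x y \<and>
     (lvl ps i0 U y < lvl ps i0 U x \<or> (lvl ps i0 U y = lvl ps i0 U x \<and> par ps i0 U x \<noteq> par ps i0 U y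
        \<and> par ps i0 U x = (\<not> shareX ps x y)))}"

definition SS :: "nat list \<Rightarrow> nat \<Rightarrow> nat set" where
  "SS ps i0 = {k. 1 \<le> k \<and> k < length ps \<and> k \<noteq> i0}"

locale sch =
  fixes ps :: "nat list" and i0 :: nat and U :: "(nat \<times> nat) set"
  assumes g: "good ps"
    and H: "(i0 = length ps \<and> U = {}) \<or>
            (\<exists>j0. 0 < i0 \<and> i0 < length ps \<and> 0 < j0 \<and> j0 < ps ! i0 \<and> U = {(i0, j0 - 1), (i0, j0)})"
begin

abbreviation "m \<equiv> mm ps i0"
abbreviation "K \<equiv> KK ps i0"
abbreviation "S \<equiv> SS ps i0"
abbreviation "lv \<equiv> lvl ps i0 U"
abbreviation "pa \<equiv> par ps i0 U"

lemma i0pos: "0 < i0"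
  using H g unfolding good_def by auto

lemma ps0: "ps ! 0 = 1" using g unfolding good_def by auto

lemma ps2: "0 < i \<Longrightarrow> i < length ps \<Longrightarrow> 2 \<le> ps ! i" using g unfolding good_def by auto

lemma U_sub: "x \<in> U \<Longrightarrow> fst x = i0 \<and> i0 < length ps \<and> x \<in> Ix ps"
  using H unfolding Ix_def by auto

lemma U_card: "card U \<le> 2"
  using H by (auto simp: card_insert_if)

lemma U_fin: "finite U" using H by auto

lemma pos_range: "k \<in> S \<Longrightarrow> 1 \<le> pos i0 k \<and> pos i0 k \<le> m"
  using H unfolding SS_def pos_def mm_def by auto

lemma pos_inj: "inj_on (pos i0) S"
  unfolding inj_on_def SS_def pos_def by auto

lemma card_S: "card S = m"
proof (cases "i0 = length ps")
  case True
  then have "S = {1..<length ps}" unfolding SS_def by auto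
  then show ?thesis using True unfolding mm_def by simp
next
  case False
  then have i: "0 < i0" "i0 < length ps" using H by auto
  then have "S = {1..<length ps} - {i0}" unfolding SS_def by auto
  then show ?thesis using i unfolding mm_def by simp
qed

lemma fin_S: "finite S" unfolding SS_def by auto

lemma K_le: "K \<le> max 1 m" unfolding KK_def by auto

lemma m_le: "m < length ps" unfolding mm_def using g unfolding good_def by auto

lemma card_pos_less: "card {k\<in>S. pos i0 k < t} \<le> t - 1"
proof -
  have "card {k\<in>S. pos i0 k < t} = card (pos i0 ` {k\<in>S. pos i0 k < t})"
    using pos_inj by (intro card_image[symmetric]) (auto intro: inj_on_subset)
  also have "\<dots> \<le> card {1..<t}"
    by (rule card_mono) (use pos_range in auto)
  finally show ?thesis by simp
qed

end




context sch begin

lemma Ix0: "x \<in> Ix ps \<Longrightarrow> fst x = 0 \<Longrightarrow> x = (0,0)"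
  using ps0 unfolding Ix_def by (cases x) auto

lemma inS: "x \<in> Ix ps \<Longrightarrow> fst x \<noteq> 0 \<Longrightarrow> fst x \<noteq> i0 \<Longrightarrow> fst x \<in> S"
  unfolding Ix_def SS_def by auto

lemma lv_ab: "x \<in> Ix ps \<Longrightarrow> x \<notin> U \<Longrightarrow> isab ps x \<Longrightarrow> fst x \<noteq> i0 \<Longrightarrow>
   lv x = 2 + min (pos i0 (fst x)) K \<and> 3 \<le> lv x \<and> lv x < length ps + 10"
  using inS[of x] pos_range[of "fst x"] K_le m_le unfolding lvl_def isab_def KK_def by auto

lemma notU_i0ab: "x \<in> Ix ps \<Longrightarrow> y \<in> Ix ps \<Longrightarrow> x \<notin> U \<Longrightarrow> y \<notin> U \<Longrightarrow> isab ps x \<Longrightarrow> isab ps y \<Longrightarrow>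
  fst x = i0 \<Longrightarrow> fst y = i0 \<Longrightarrow> iadj ps x y \<Longrightarrow> False"
proof -
  assume a: "x \<in> Ix ps" "y \<in> Ix ps" "x \<notin> U" "y \<notin> U" "isab ps x" "isab ps y" "fst x = i0" "fst y = i0" "iadj ps x y"
  obtain j l where xy: "x = (i0, j)" "y = (i0, l)" using a by (cases x, cases y) auto
  have il: "i0 < length ps" using a(1) xy unfolding Ix_def by auto
  then obtain j0 where U: "0 < j0" "j0 < ps ! i0" "U = {(i0, j0 - 1), (i0, j0)}" using H by auto
  have jl: "j < ps ! i0" "l < ps ! i0" using a xy unfolding Ix_def by auto
  have "ps ! i0 = 2 \<and> {j, l} = {0, 1}" using a(5,6,9) jl unfolding xy isab_def iadj_def by auto
  then have "j0 = 1" using U by auto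
  then show False using a(3,4) U \<open>ps ! i0 = 2 \<and> {j, l} = {0, 1}\<close> xy by (auto simp: doubleton_eq_iff)
qed

lemma bip:
  assumes x: "x \<in> Ix ps" and y: "y \<in> Ix ps" and adj: "iadj ps x y" and eq: "lv x = lv y"
  shows "pa x \<noteq> pa y"
proof -
  obtain i j k l where xy: "x = (i, j)" "y = (k, l)" by (cases x, cases y)
  have ne: "x \<noteq> y" using adj unfolding iadj_def by auto
  have hx: "i < length ps" "j < ps ! i" and hy: "k < length ps" "l < ps ! k" using x y xy unfolding Ix_def by auto
  show ?thesis
  proof (cases "x \<in> U")
    case True
    then have "y \<in> U" using eq unfolding lvl_def by (auto split: if_splits)
    then show ?thesis using True ne H unfolding par_def xy by auto
  next
    case xU: False
    then have yU: "y \<notin> U" using eq unfolding lvl_def by (auto split: if_splits)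
    show ?thesis
    proof (cases "i = 0")
      case True
      then have "lv x = 1" using xU xy unfolding lvl_def by auto
      then have "k = 0" using eq yU xy lv_ab[OF y] unfolding lvl_def by (auto split: if_splits)
      then show ?thesis using Ix0[OF x] Ix0[OF y] True xy ne by auto
    next
      case i0': False
      show ?thesis
      proof (cases "isab ps x")
        case xab: True
        show ?thesis
        proof (cases "i = i0")
          case True
          then have "lv x = 2" using xU xab i0' xy unfolding lvl_def by auto
          then have "k \<noteq> 0 \<and> isab ps y \<and> k = i0" using eq yU xy lv_ab[OF y] unfolding lvl_def
            by (auto split: if_splits)
          then have False using notU_i0ab[OF x y xU yU xab] True xy adj by auto
          then show ?thesis ..
        next
          case False
          have lx: "lv x = 2 + min (pos i0 i) K" "3 \<le> lv x" "lv x < length ps + 10"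
            using lv_ab[OF x xU xab] False xy by auto
          have yab: "k \<noteq> 0 \<and> isab ps y \<and> k \<noteq> i0" using eq yU xy lx unfolding lvl_def
            by (auto split: if_splits)
          then have ly: "lv y = 2 + min (pos i0 k) K" using lv_ab[OF y yU] xy by auto
          have iS: "i \<in> S" and kS: "k \<in> S" using inS[OF x] inS[OF y] xy i0' False yab by auto
          show ?thesis
          proof (cases "k = i")
            case True
            have "j \<noteq> l" using ne xy True by auto
            then have "(j = 0) \<noteq> (l = 0)" using xab yab xy True unfolding isab_def by auto
            then show ?thesis using xU yU xab yab xy True unfolding par_def by auto
          next
            case False
            have sh: "shareX ps x y" using adj False xy unfolding iadj_def shareX_def by auto
            have pne: "pos i0 i \<noteq> pos i0 k" using pos_inj iS kS False unfolding inj_on_def by auto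
            have mq: "min (pos i0 i) K = min (pos i0 k) K" using lx ly eq by auto
            have "pos i0 i \<ge> K" "pos i0 k \<ge> K" using mq pne by linarith+
            moreover have "pos i0 i \<le> m" "pos i0 k \<le> m" "1 \<le> pos i0 i" "1 \<le> pos i0 k"
              using pos_range iS kS by auto
            ultimately have "tp ps i0 i \<noteq> tp ps i0 k" using pne unfolding tp_def KK_def by auto
            moreover have "(j = 0 \<and> l = 0) \<or> (j \<noteq> 0 \<and> l \<noteq> 0)"
              using sh xy ps2[of i] ps2[of k] hx hy i0' yab unfolding shareX_def by auto
            ultimately show ?thesis using xU yU xab yab xy unfolding par_def by auto
          qed
        qed
      next
        case xc: False
        have lx: "lv x = length ps + 10" using xU xc i0' xy unfolding lvl_def by auto
        have yc: "k \<noteq> 0 \<and> \<not> isab ps y"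
        proof -
          have "\<not> (isab ps y \<and> k \<noteq> i0)" using lv_ab[OF y yU] lx eq xy by auto
          moreover have "k \<noteq> 0" using lx eq yU xy unfolding lvl_def by (auto split: if_splits)
          moreover have "\<not> (isab ps y \<and> k = i0)" using lx eq yU xy \<open>k \<noteq> 0\<close> unfolding lvl_def by auto
          ultimately show ?thesis by auto
        qed
        have "i = k \<and> (Suc j = l \<or> Suc l = j)" using adj xc yc xy unfolding iadj_def isab_def by auto
        then show ?thesis using xU yU xc yc xy unfolding par_def by auto
      qed
    qed
  qed
qed

lemma orient: "orientation (Ix ps) (iadj ps) (Bs ps i0 U)"
  unfolding orientation_def
proof (intro conjI ballI impI)
  show "Bs ps i0 U \<subseteq> {(u, v). u \<in> Ix ps \<and> v \<in> Ix ps \<and> iadj ps u v}" unfolding Bs_def by auto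
next
  fix u v assume u: "u \<in> Ix ps" and v: "v \<in> Ix ps" and a: "iadj ps u v"
  have a': "iadj ps v u" using a unfolding iadj_def by auto
  have s: "shareX ps u v = shareX ps v u" unfolding shareX_def by auto
  show "(u, v) \<in> Bs ps i0 U \<or> (v, u) \<in> Bs ps i0 U"
  proof (cases "lv u = lv v")
    case True
    then have "pa u \<noteq> pa v" using bip[OF u v a] by auto
    then show ?thesis using True u v a a' s unfolding Bs_def by auto
  next
    case False
    then show ?thesis using u v a a' unfolding Bs_def by auto
  qed
qed

lemma kp: "kernel_perfect (Ix ps) (Bs ps i0 U)"
  by (rule levels_kernel_perfect[where lv = lv and pa = pa]) (auto simp: finite_Ix Bs_def)

end



context sch begin

abbreviation "B \<equiv> Bs ps i0 U"
abbreviation "c0 \<equiv> (if i0 < length ps then 1 else 0 :: nat)"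

lemma lv_pos: "w \<notin> U \<Longrightarrow> 1 \<le> lv w" unfolding lvl_def by auto

lemma Bs_D: "(x, w) \<in> B \<Longrightarrow> w \<in> Ix ps \<and> iadj ps x w \<and> (lv w < lv x \<or> (lv w = lv x \<and> pa x \<noteq> pa w \<and> pa x = (\<not> shareX ps x w)))"
  unfolding Bs_def by auto

lemma fin_out: "finite {w. (x, w) \<in> B}"
  by (rule finite_subset[OF _ finite_Ix]) (auto simp: Bs_def)

lemma card_single: "fst z = i0 \<Longrightarrow> card ({z} \<inter> Ix ps) \<le> c0"
proof (cases "i0 < length ps")
  case True
  have "card ({z} \<inter> Ix ps) \<le> card {z}" by (rule card_mono) auto
  then show ?thesis using True by simp
next
  case False
  assume "fst z = i0"
  then have "{z} \<inter> Ix ps = {}" using False unfolding Ix_def by (cases z) auto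
  then show ?thesis by simp
qed

lemma out_U: assumes "x \<in> U" shows "out_degree B x \<le> 1"
proof -
  have "{w. (x, w) \<in> B} \<subseteq> U - {x}"
  proof
    fix w assume "w \<in> {w. (x, w) \<in> B}"
    then have "lv w \<le> lv x" "w \<noteq> x" using Bs_D[of x w] unfolding iadj_def by auto
    then show "w \<in> U - {x}" using assms lv_pos[of w] unfolding lvl_def by (auto split: if_splits)
  qed
  then have "card {w. (x, w) \<in> B} \<le> card (U - {x})" using U_fin by (auto intro: card_mono)
  also have "\<dots> \<le> 1" using U_card assms U_fin by (simp add: card_Diff_singleton)
  finally show ?thesis unfolding out_degree_def .
qed

lemma out_c: assumes "x \<in> Ix ps" "x \<notin> U" "fst x \<noteq> 0" "\<not> isab ps x" shows "out_degree B x \<le> 2"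
proof -
  have sub: "{w. (x, w) \<in> B} \<subseteq> {(fst x, snd x - 1), (fst x, Suc (snd x))}"
  proof
    fix w assume "w \<in> {w. (x, w) \<in> B}"
    then have "iadj ps x w" using Bs_D by auto
    then show "w \<in> {(fst x, snd x - 1), (fst x, Suc (snd x))}" using assms unfolding iadj_def isab_def
      by (cases w) auto
  qed
  have "card {w. (x, w) \<in> B} \<le> card {(fst x, snd x - 1), (fst x, Suc (snd x))}" by (rule card_mono[OF _ sub]) simp
  also have "\<dots> \<le> 2" by (simp add: card_insert_if)
  finally show ?thesis unfolding out_degree_def .
qed

lemma out_e0: assumes "(0,0) \<notin> U" shows "out_degree B (0,0) \<le> card U"
proof -
  have "{w. ((0,0), w) \<in> B} \<subseteq> U"
  proof
    fix w assume "w \<in> {w. ((0,0), w) \<in> B}"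
    then have w: "w \<in> Ix ps" "lv w \<le> lv (0,0)" "w \<noteq> (0,0)" using Bs_D[of "(0,0)" w] unfolding iadj_def by auto
    have "lv (0,0) = 1" using assms unfolding lvl_def by auto
    show "w \<in> U"
    proof (rule ccontr)
      assume "w \<notin> U"
      then have "fst w = 0" using w \<open>lv (0,0) = 1\<close> unfolding lvl_def by (auto split: if_splits)
      then show False using Ix0[OF w(1)] w by auto
    qed
  qed
  then show ?thesis unfolding out_degree_def using U_fin by (auto intro: card_mono)
qed

lemma out_i0: assumes x: "x \<in> Ix ps" "x \<notin> U" "isab ps x" "fst x = i0" shows "out_degree B x \<le> 3"
proof -
  have lx: "lv x = 2" using assms i0pos unfolding lvl_def isab_def by auto
  have "{w. (x, w) \<in> B} \<subseteq> insert (0,0) U"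
  proof
    fix w assume "w \<in> {w. (x, w) \<in> B}"
    then have w: "w \<in> Ix ps" "lv w \<le> 2" "iadj ps x w" using Bs_D[of x w] lx by auto
    show "w \<in> insert (0,0) U"
    proof (rule ccontr)
      assume nw: "w \<notin> insert (0,0) U"
      then have "fst w \<noteq> 0" using Ix0[OF w(1)] by auto
      then have "isab ps w \<and> fst w = i0" using w nw lv_ab[OF w(1)] unfolding lvl_def by (auto split: if_splits)
      then show False using notU_i0ab[OF x(1) w(1) x(2) _ x(3) _ x(4) _ w(3)] nw by auto
    qed
  qed
  then have "card {w. (x, w) \<in> B} \<le> card (insert (0,0) U)" using U_fin by (auto intro: card_mono)
  also have "\<dots> \<le> 3" using U_card U_fin by (simp add: card_insert_if)
  finally show ?thesis unfolding out_degree_def .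
qed

lemma facts_a: assumes "i \<in> S"
  shows "(i,0) \<in> Ix ps" "(i,0) \<notin> U" "isab ps (i,0)" "lv (i,0) = 2 + min (pos i0 i) K" "pa (i,0) = tp ps i0 i"
proof -
  show "(i,0) \<in> Ix ps" using assms ps2[of i] unfolding SS_def Ix_def by auto
  show "(i,0) \<notin> U" using U_sub assms unfolding SS_def by auto
  show "isab ps (i,0)" using assms unfolding SS_def isab_def by auto
  then show "lv (i,0) = 2 + min (pos i0 i) K" using lv_ab[of "(i,0)"] \<open>(i,0) \<in> Ix ps\<close> \<open>(i,0) \<notin> U\<close> assms
    unfolding SS_def by auto
  show "pa (i,0) = tp ps i0 i" using \<open>(i,0) \<notin> U\<close> \<open>isab ps (i,0)\<close> unfolding par_def by auto
qed

lemma facts_b: assumes "i \<in> S"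
  shows "(i, ps!i - 1) \<in> Ix ps" "(i, ps!i - 1) \<notin> U" "isab ps (i, ps!i - 1)"
    "lv (i, ps!i - 1) = 2 + min (pos i0 i) K" "pa (i, ps!i - 1) = (\<not> tp ps i0 i)" "2 \<le> ps ! i"
proof -
  show n: "2 \<le> ps ! i" using assms ps2[of i] unfolding SS_def by auto
  show "(i, ps!i - 1) \<in> Ix ps" using assms n unfolding SS_def Ix_def by auto
  show "(i, ps!i - 1) \<notin> U" using U_sub assms unfolding SS_def by auto
  show "isab ps (i, ps!i - 1)" using assms n unfolding SS_def isab_def by auto
  then show "lv (i, ps!i - 1) = 2 + min (pos i0 i) K" using lv_ab[of "(i, ps!i - 1)"] \<open>(i, ps!i - 1) \<in> Ix ps\<close> \<open>(i, ps!i - 1) \<notin> U\<close> assms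
    unfolding SS_def by auto
  show "pa (i, ps!i - 1) = (\<not> tp ps i0 i)" using \<open>(i, ps!i - 1) \<notin> U\<close> \<open>isab ps (i, ps!i - 1)\<close> n unfolding par_def by auto
qed

end



context sch begin

lemma card_un3: "card (A \<union> C \<union> D) \<le> card A + card C + card D"
  using card_Un_le[of "A \<union> C" D] card_Un_le[of A C] by linarith

lemma out_a: assumes iS: "i \<in> S" shows "out_degree B (i,0) \<le> m + c0"
proof -
  note fa = facts_a[OF iS]
  have mS: "1 \<le> m" using card_S iS fin_S by (metis card_0_eq empty_iff less_one not_le)
  show ?thesis
  proof (cases "tp ps i0 i")
    case True
    have m2: "2 \<le> m" "pos i0 i = m" using True unfolding tp_def by auto
    have KK: "K = m - 1" using m2 unfolding KK_def by auto
    let ?T = "{k\<in>S. pos i0 k < m - 1}"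
    have sub: "{w. ((i,0), w) \<in> B} \<subseteq> {(0,0), (i,1)} \<union> ({(i0,0)} \<inter> Ix ps) \<union> (\<lambda>k. (k,0)) ` ?T"
    proof
      fix w assume "w \<in> {w. ((i,0), w) \<in> B}"
      then have w: "w \<in> Ix ps" "iadj ps (i,0) w" "lv w < lv (i,0) \<or> (lv w = lv (i,0) \<and> pa (i,0) \<noteq> pa w \<and> pa (i,0) = (\<not> shareX ps (i,0) w))"
        using Bs_D by auto
      obtain k l where wk: "w = (k,l)" by (cases w)
      have "ps ! i \<ge> 2" using facts_b[OF iS] by auto
      then have "(l = 0 \<and> k \<noteq> i) \<or> w = (i,1)" using w(2) wk unfolding iadj_def by auto
      then show "w \<in> {(0,0), (i,1)} \<union> ({(i0,0)} \<inter> Ix ps) \<union> (\<lambda>k. (k,0)) ` ?T"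
      proof
        assume a: "l = 0 \<and> k \<noteq> i"
        show ?thesis
        proof (cases "k = 0 \<or> k = i0")
          case True then show ?thesis using a wk w(1) by auto
        next
          case False
          then have kS: "k \<in> S" using inS[OF w(1)] wk by auto
          note fk = facts_a[OF kS]
          have "shareX ps (i,0) w" using a wk unfolding shareX_def by auto
          then have "lv w < lv (i,0)" using w(3) fa True by auto
          then have "pos i0 k < m - 1" using fk fa a wk m2 KK by auto
          then show ?thesis using kS a wk by auto
        qed
      qed auto
    qed
    have "card {w. ((i,0), w) \<in> B} \<le> card ({(0,0), (i,1)} \<union> ({(i0,0)} \<inter> Ix ps) \<union> (\<lambda>k. (k,0)) ` ?T)"
      by (rule card_mono[OF _ sub]) (auto simp: fin_S)
    also have "\<dots> \<le> card {(0,0), (i,1::nat)} + card ({(i0,0)} \<inter> Ix ps) + card ((\<lambda>k. (k,0::nat)) ` ?T)"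
      by (rule card_un3)
    also have "\<dots> \<le> 2 + c0 + (m - 2)"
      using card_single[of "(i0,0)"] card_pos_less[of "m - 1"] card_image_le[of ?T "\<lambda>k. (k,0::nat)"] fin_S
      by (intro add_mono) (auto simp: card_insert_if numeral_2_eq_2)
    finally show ?thesis unfolding out_degree_def using m2 by simp
  next
    case False
    let ?T = "S - {i}"
    have sub: "{w. ((i,0), w) \<in> B} \<subseteq> {(0,0)} \<union> ({(i0,0)} \<inter> Ix ps) \<union> (\<lambda>k. (k,0)) ` ?T"
    proof
      fix w assume "w \<in> {w. ((i,0), w) \<in> B}"
      then have w: "w \<in> Ix ps" "iadj ps (i,0) w" "lv w < lv (i,0) \<or> (lv w = lv (i,0) \<and> pa (i,0) \<noteq> pa w \<and> pa (i,0) = (\<not> shareX ps (i,0) w))"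
        using Bs_D by auto
      obtain k l where wk: "w = (k,l)" by (cases w)
      have n2: "ps ! i \<ge> 2" using facts_b[OF iS] by auto
      then have "(l = 0 \<and> k \<noteq> i) \<or> w = (i,1)" using w(2) wk unfolding iadj_def by auto
      then show "w \<in> {(0,0)} \<union> ({(i0,0)} \<inter> Ix ps) \<union> (\<lambda>k. (k,0)) ` ?T"
      proof
        assume a: "l = 0 \<and> k \<noteq> i"
        show ?thesis
        proof (cases "k = 0 \<or> k = i0")
          case True then show ?thesis using a wk w(1) by auto
        next
          case False
          then have kS: "k \<in> S" using inS[OF w(1)] wk by auto
          then show ?thesis using a wk by auto
        qed
      next
        assume a: "w = (i,1)"
        have wU: "w \<notin> U" using U_sub iS a unfolding SS_def by auto
        have iz: "i \<noteq> 0" "i \<noteq> i0" using iS unfolding SS_def by auto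
        show ?thesis
        proof (cases "ps ! i = 2")
          case True
          have "isab ps w" using True a iz unfolding isab_def by auto
          then have "lv w = lv (i,0)" using lv_ab[OF w(1) wU] fa a iz by auto
          moreover have "\<not> shareX ps (i,0) w" using a True unfolding shareX_def by auto
          ultimately have False using w(3) fa False by auto
          then show ?thesis ..
        next
          case F2: False
          have "\<not> isab ps w" using F2 n2 a iz unfolding isab_def by auto
          then have "lv w = length ps + 10" using wU a iz unfolding lvl_def by auto
          moreover have "lv (i,0) < length ps + 10" using lv_ab[OF fa(1) fa(2) fa(3)] iz by auto
          ultimately have False using w(3) by auto
          then show ?thesis ..
        qed
      qed
    qed
    have "card {w. ((i,0), w) \<in> B} \<le> card ({(0,0)} \<union> ({(i0,0)} \<inter> Ix ps) \<union> (\<lambda>k. (k,0)) ` ?T)"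
      by (rule card_mono[OF _ sub]) (auto simp: fin_S)
    also have "\<dots> \<le> card {(0::nat,0::nat)} + card ({(i0,0)} \<inter> Ix ps) + card ((\<lambda>k. (k,0::nat)) ` ?T)"
      by (rule card_un3)
    also have "\<dots> \<le> 1 + c0 + (m - 1)"
      using card_single[of "(i0,0)"] card_image_le[of ?T "\<lambda>k. (k,0::nat)"] fin_S card_S iS
      by (intro add_mono) (auto simp: card_Diff_singleton)
    finally show ?thesis unfolding out_degree_def using mS by simp
  qed
qed

lemma out_b: assumes iS: "i \<in> S" shows "out_degree B (i, ps!i - 1) \<le> max 2 m + c0"
proof -
  note fb = facts_b[OF iS]
  let ?x = "(i, ps!i - 1)"
  have mS: "1 \<le> m" using card_S iS fin_S by (metis card_0_eq empty_iff less_one not_le)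
  have iz: "i \<noteq> 0" "i \<noteq> i0" "i < length ps" using iS unfolding SS_def by auto
  have adjc: "(k \<noteq> i \<and> Suc l = ps ! k) \<or> (k, l) = (i, ps!i - 2)"
    if "(k,l) \<in> Ix ps" "iadj ps ?x (k,l)" for k l
    using that fb(6) unfolding iadj_def Ix_def by auto
  have ki: "(k, ps!k - 1) \<in> {(0,0)} \<union> ({(i0, ps!i0 - 1)} \<inter> Ix ps) \<or> k \<in> S"
    if "(k,l) \<in> Ix ps" "Suc l = ps ! k" for k l
  proof (cases "k = 0 \<or> k = i0")
    case True
    then show ?thesis using that ps0 unfolding Ix_def by auto
  next
    case False
    then show ?thesis using that inS[of "(k,l)"] by auto
  qed
  have ab2: "lv (i, ps!i - 2) = lv ?x \<and> \<not> shareX ps ?x (i, ps!i - 2)" if "ps ! i = 2"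
  proof -
    have "(i, ps!i - 2) = (i,0)" using that by auto
    then show ?thesis using facts_a[OF iS] fb that unfolding shareX_def by auto
  qed
  have c2: "lv (i, ps!i - 2) = length ps + 10" if "ps ! i \<noteq> 2"
  proof -
    have "(i, ps!i - 2) \<notin> U" using U_sub iz by auto
    moreover have "\<not> isab ps (i, ps!i - 2)" using that fb(6) iz unfolding isab_def by auto
    ultimately show ?thesis using iz unfolding lvl_def by auto
  qed
  have lxs: "lv ?x < length ps + 10" using lv_ab[OF fb(1) fb(2) fb(3)] iz by auto
  show ?thesis
  proof (cases "tp ps i0 i")
    case True
    let ?T = "S - {i}"
    have sub: "{w. (?x, w) \<in> B} \<subseteq> {(0,0)} \<union> ({(i0, ps!i0 - 1)} \<inter> Ix ps) \<union> (\<lambda>k. (k, ps!k - 1)) ` ?T"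
    proof
      fix w assume "w \<in> {w. (?x, w) \<in> B}"
      then have w: "w \<in> Ix ps" "iadj ps ?x w" "lv w < lv ?x \<or> (lv w = lv ?x \<and> pa ?x \<noteq> pa w \<and> pa ?x = (\<not> shareX ps ?x w))"
        using Bs_D by auto
      obtain k l where wk: "w = (k,l)" by (cases w)
      have dj: "(k \<noteq> i \<and> Suc l = ps ! k) \<or> (k, l) = (i, ps!i - 2)" using adjc[of k l] w wk by auto
      from dj show "w \<in> {(0,0)} \<union> ({(i0, ps!i0 - 1)} \<inter> Ix ps) \<union> (\<lambda>k. (k, ps!k - 1)) ` ?T"
      proof (elim disjE)
        assume a: "k \<noteq> i \<and> Suc l = ps ! k"
        then have wl: "w = (k, ps!k - 1)" using wk by auto
        show ?thesis using ki[of k l] a w(1) wk wl by auto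
      next
        assume a: "(k, l) = (i, ps ! i - 2)"
        show ?thesis
        proof (cases "ps ! i = 2")
          case True
          then have False using ab2 w(3) fb(5) \<open>tp ps i0 i\<close> a wk by auto
          then show ?thesis ..
        next
          case False
          then have False using c2 w(3) a wk lxs by auto
          then show ?thesis ..
        qed
      qed
    qed
    have "card {w. (?x, w) \<in> B} \<le> card ({(0,0)} \<union> ({(i0, ps!i0 - 1)} \<inter> Ix ps) \<union> (\<lambda>k. (k, ps!k - 1)) ` ?T)"
      by (rule card_mono[OF _ sub]) (auto simp: fin_S)
    also have "\<dots> \<le> card {(0::nat,0::nat)} + card ({(i0, ps!i0 - 1)} \<inter> Ix ps) + card ((\<lambda>k. (k, ps!k - 1)) ` ?T)"
      by (rule card_un3)
    also have "\<dots> \<le> 1 + c0 + (m - 1)"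
      using card_single[of "(i0, ps!i0 - 1)"] card_image_le[of ?T "\<lambda>k. (k, ps!k - 1)"] fin_S card_S iS
      by (intro add_mono) (auto simp: card_Diff_singleton)
    finally show ?thesis unfolding out_degree_def using mS by simp
  next
    case False
    let ?T = "{k\<in>S. pos i0 k < min (pos i0 i) K}"
    have sub: "{w. (?x, w) \<in> B} \<subseteq> {(0,0), (i, ps!i - 2)} \<union> ({(i0, ps!i0 - 1)} \<inter> Ix ps) \<union> (\<lambda>k. (k, ps!k - 1)) ` ?T"
    proof
      fix w assume "w \<in> {w. (?x, w) \<in> B}"
      then have w: "w \<in> Ix ps" "iadj ps ?x w" "lv w < lv ?x \<or> (lv w = lv ?x \<and> pa ?x \<noteq> pa w \<and> pa ?x = (\<not> shareX ps ?x w))"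
        using Bs_D by auto
      obtain k l where wk: "w = (k,l)" by (cases w)
      have dj: "(k \<noteq> i \<and> Suc l = ps ! k) \<or> (k, l) = (i, ps!i - 2)" using adjc[of k l] w wk by auto
      from dj show "w \<in> {(0,0), (i, ps!i - 2)} \<union> ({(i0, ps!i0 - 1)} \<inter> Ix ps) \<union> (\<lambda>k. (k, ps!k - 1)) ` ?T"
      proof (elim disjE)
        assume a: "k \<noteq> i \<and> Suc l = ps ! k"
        then have wl: "w = (k, ps!k - 1)" using wk by auto
        show ?thesis
        proof (cases "k \<in> S")
          case kS: True
          note fk = facts_b[OF kS]
          have "shareX ps ?x w" using a wl fb(6) unfolding shareX_def by auto
          then have "lv w < lv ?x" using w(3) fb(5) False by auto
          then have "pos i0 k < min (pos i0 i) K" using fk(4) fb(4) wl by auto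
          then show ?thesis using kS wl by auto
        next
          case F: False
          show ?thesis using ki[of k l] a w(1) wk wl F by auto
        qed
      qed (use wk in auto)
    qed
    have pk: "1 \<le> min (pos i0 i) K" using pos_range[OF iS] unfolding KK_def by auto
    have "card {w. (?x, w) \<in> B} \<le> card ({(0,0), (i, ps!i - 2)} \<union> ({(i0, ps!i0 - 1)} \<inter> Ix ps) \<union> (\<lambda>k. (k, ps!k - 1)) ` ?T)"
      by (rule card_mono[OF _ sub]) (auto simp: fin_S)
    also have "\<dots> \<le> card {(0,0), (i, ps!i - 2)} + card ({(i0, ps!i0 - 1)} \<inter> Ix ps) + card ((\<lambda>k. (k, ps!k - 1)) ` ?T)"
      by (rule card_un3)
    also have "\<dots> \<le> 2 + c0 + (min (pos i0 i) K - 1)"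
      using card_single[of "(i0, ps!i0 - 1)"] card_pos_less[of "min (pos i0 i) K"] card_image_le[of ?T "\<lambda>k. (k, ps!k - 1)"] fin_S
      by (intro add_mono) (auto simp: card_insert_if)
    finally show ?thesis unfolding out_degree_def using pk unfolding KK_def by simp
  qed
qed

end



lemma out_cases:
  assumes g: "good ps" and x: "x \<in> Ix ps"
  shows "x \<in> U \<or> x = (0,0) \<or> (x \<notin> U \<and> isab ps x \<and> fst x = i0) \<or>
    (fst x \<in> SS ps i0 \<and> x = (fst x, 0)) \<or> (fst x \<in> SS ps i0 \<and> x = (fst x, ps ! fst x - 1)) \<or>
    (x \<notin> U \<and> fst x \<noteq> 0 \<and> \<not> isab ps x)"
proof -
  have "fst x = 0 \<Longrightarrow> x = (0,0)" using x g unfolding Ix_def good_def by (cases x) auto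
  then show ?thesis using x unfolding isab_def SS_def Ix_def by (cases x) auto
qed

lemma case_x1:
  assumes g: "good ps" and p: "length ps \<le> p" "4 \<le> p"
  shows "f_kernel_perfect_orientation (Ix ps) (iadj ps) (\<lambda>x. if snd x = 0 then length ps else p) (Bs ps (length ps) {})"
proof -
  interpret sch ps "length ps" "{}" using g by unfold_locales auto
  have m: "m = length ps - 1" unfolding mm_def by auto
  have c: "c0 = 0" by auto
  have "\<forall>x\<in>Ix ps. 1 + out_degree B x \<le> (if snd x = 0 then length ps else p)"
  proof
    fix x assume x: "x \<in> Ix ps"
    have L: "1 \<le> length ps" using g unfolding good_def by (cases ps) auto
    from out_cases[OF g x, of "{}" "length ps"] show "1 + out_degree B x \<le> (if snd x = 0 then length ps else p)"
    proof (elim disjE)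
      assume "x = (0,0)" then show ?thesis using out_e0 L by auto
    next
      assume "x \<notin> {} \<and> isab ps x \<and> fst x = length ps" then show ?thesis using x unfolding Ix_def by auto
    next
      assume a: "fst x \<in> S \<and> x = (fst x, 0)"
      then obtain i where i: "i \<in> S" "x = (i, 0)" by blast
      have "out_degree B (i,0) \<le> m" using out_a[OF i(1)] by simp
      then show ?thesis using i m L by simp
    next
      assume a: "fst x \<in> S \<and> x = (fst x, ps ! fst x - 1)"
      then obtain i where i: "i \<in> S" "x = (i, ps ! i - 1)" by blast
      have "out_degree B (i, ps ! i - 1) \<le> max 2 m" using out_b[OF i(1)] by simp
      then show ?thesis using i m p facts_b(6)[OF i(1)] by auto
    next
      assume a: "x \<notin> {} \<and> fst x \<noteq> 0 \<and> \<not> isab ps x"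
      then have "out_degree B x \<le> 2" using out_c x by auto
      moreover have "snd x \<noteq> 0" using a unfolding isab_def by auto
      ultimately show ?thesis using p by auto
    qed auto
  qed
  then show ?thesis unfolding f_kernel_perfect_orientation_def using orient kp by auto
qed

lemma case_int:
  assumes g: "good ps" and p: "length ps \<le> p" "4 \<le> p"
    and i0: "i0 < length ps" "0 < j0" "j0 < ps ! i0"
  shows "f_kernel_perfect_orientation (Ix ps) (iadj ps) (\<lambda>x. if x \<in> {(i0, j0 - 1), (i0, j0)} then 2 else p)
     (Bs ps i0 {(i0, j0 - 1), (i0, j0)})"
proof -
  have i0p: "0 < i0" using i0 g unfolding good_def by (cases i0) auto
  interpret sch ps i0 "{(i0, j0 - 1), (i0, j0)}" using g i0 i0p by unfold_locales auto
  have m: "m = length ps - 2" unfolding mm_def using i0 by auto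
  have c: "c0 = 1" using i0 by auto
  have "\<forall>x\<in>Ix ps. 1 + out_degree B x \<le> (if x \<in> {(i0, j0 - 1), (i0, j0)} then 2 else p)"
  proof
    fix x assume x: "x \<in> Ix ps"
    have L: "1 \<le> length ps" using g unfolding good_def by (cases ps) auto
    from out_cases[OF g x, of "{(i0, j0 - 1), (i0, j0)}" i0]
    show "1 + out_degree B x \<le> (if x \<in> {(i0, j0 - 1), (i0, j0)} then 2 else p)"
    proof (elim disjE)
      assume "x \<in> {(i0, j0 - 1), (i0, j0)}" then show ?thesis using out_U by auto
    next
      assume a: "x = (0,0)"
      then have "x \<notin> {(i0, j0 - 1), (i0, j0)}" using i0p by auto
      moreover have "out_degree B (0,0) \<le> 2" using out_e0 U_card \<open>x \<notin> {(i0, j0 - 1), (i0, j0)}\<close> a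
        by (meson le_trans)
      ultimately show ?thesis using a p by auto
    next
      assume "x \<notin> {(i0, j0 - 1), (i0, j0)} \<and> isab ps x \<and> fst x = i0"
      then show ?thesis using out_i0[OF x] p by auto
    next
      assume a: "fst x \<in> S \<and> x = (fst x, 0)"
      then have "x \<notin> {(i0, j0 - 1), (i0, j0)}" unfolding SS_def by auto
      moreover have "out_degree B x \<le> m + 1"
      proof -
        obtain i where i: "i \<in> S" "x = (i, 0)" using a by blast
        show ?thesis using out_a[OF i(1)] c i by simp
      qed
      ultimately show ?thesis using m p by auto
    next
      assume a: "fst x \<in> S \<and> x = (fst x, ps ! fst x - 1)"
      then have "x \<notin> {(i0, j0 - 1), (i0, j0)}" unfolding SS_def by auto
      moreover have "out_degree B x \<le> max 2 m + 1"
      proof -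
        obtain i where i: "i \<in> S" "x = (i, ps ! i - 1)" using a by blast
        show ?thesis using out_b[OF i(1)] c i by simp
      qed
      ultimately show ?thesis using m p by auto
    next
      assume a: "x \<notin> {(i0, j0 - 1), (i0, j0)} \<and> fst x \<noteq> 0 \<and> \<not> isab ps x"
      then have "out_degree B x \<le> 2" using out_c x by auto
      then show ?thesis using p a by auto
    qed
  qed
  then show ?thesis unfolding f_kernel_perfect_orientation_def using orient kp by auto
qed




theorem mainTheorem15:
  fixes qs :: "nat list" and p :: nat
  assumes "length qs \<ge> 1"
    and "sorted qs"
    and "\<forall>q\<in>set qs. q > 0 \<and> even q"
    and "p \<ge> 4"
    and "p \<ge> max_degree (theta_vertices (1 # qs)) (theta_edges (1 # qs))"
  shows "strongly_edge_orientable (theta_vertices (1 # qs)) (theta_edges (1 # qs)) p"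
proof -
  define ps where "ps = 1 # qs"
  have g: "good ps"
    unfolding good_def ps_def
  proof (intro conjI allI impI)
    fix i assume i: "0 < i \<and> i < length (1 # qs)"
    then have "(1 # qs) ! i \<in> set qs" by (cases i) auto
    then have "(1 # qs) ! i > 0 \<and> even ((1 # qs) ! i)" using assms(3) by auto
    then show "2 \<le> (1 # qs) ! i" by (metis dvd_imp_le even_zero gr0I le_0_eq nat_le_linear)
  qed auto
  have V00: "(0,0) \<in> theta_vertices ps" unfolding theta_vertices_def by auto
  have "degree (theta_edges ps) (0,0) \<le> max_degree (theta_vertices ps) (theta_edges ps)"
    unfolding max_degree_def using V00 finite_V by auto
  then have pl: "length ps \<le> p" using assms(5) degree_x1[OF g] unfolding ps_def by auto
  have p4: "4 \<le> p" using assms(4) .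
  have E: "edg ps ` Ix ps = theta_edges ps" using edges_eq by auto
  have tr: "f_edge_orientable (theta_edges ps) f'"
    if "f_kernel_perfect_orientation (Ix ps) (iadj ps) f Bx" "\<And>x. x \<in> Ix ps \<Longrightarrow> f' (edg ps x) = f x" for f f' Bx
  proof -
    have "f_kernel_perfect_orientation (edg ps ` Ix ps) line_adj f' (map_prod (edg ps) (edg ps) ` Bx)"
      by (rule transport[OF edg_inj[OF g] edg_adj[OF g] that(2) finite_Ix that(1)])
    then show ?thesis unfolding f_edge_orientable_def E by blast
  qed
  have "\<forall>v\<in>theta_vertices ps. f_edge_orientable (theta_edges ps) (f_kv (theta_edges ps) p v)"
  proof
    fix v assume v: "v \<in> theta_vertices ps"
    from vertex_cases[OF g v]
    show "f_edge_orientable (theta_edges ps) (f_kv (theta_edges ps) p v)"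
    proof (elim disjE exE conjE)
      assume v0: "v = (0,0)"
      show ?thesis
        apply (rule tr[OF case_x1[OF g pl p4]])
        using mem_x1[OF g] degree_x1[OF g] unfolding f_kv_def v0 by auto
    next
      assume v1: "v = (0,1)"
      have "f_kernel_perfect_orientation (sig ps ` Ix ps) (iadj ps) (\<lambda>y. if Suc (snd y) = ps ! fst y then length ps else p)
        (map_prod (sig ps) (sig ps) ` Bs ps (length ps) {})"
      proof (rule transport[OF sig_inj sig_adj _ finite_Ix case_x1[OF g pl p4]])
        fix x assume "x \<in> Ix ps"
        then show "(if Suc (snd (sig ps x)) = ps ! fst (sig ps x) then length ps else p) = (if snd x = 0 then length ps else p)"
          unfolding sig_def Ix_def by auto
      qed
      then have h: "f_kernel_perfect_orientation (Ix ps) (iadj ps) (\<lambda>y. if Suc (snd y) = ps ! fst y then length ps else p)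
        (map_prod (sig ps) (sig ps) ` Bs ps (length ps) {})" unfolding sig_image .
      show ?thesis
        apply (rule tr[OF h])
        using mem_x2[OF g] degree_x2[OF g] unfolding f_kv_def v1 by auto
    next
      fix i0 j0 assume i0: "i0 < length ps" "0 < j0" "j0 < ps ! i0" and vv: "v = theta_vertex ps i0 j0"
      show ?thesis
      proof (rule tr[OF case_int[OF g pl p4 i0]])
        fix x assume x: "x \<in> Ix ps"
        have "(x \<in> {(i0, j0 - 1), (i0, j0)}) = (theta_vertex ps i0 j0 \<in> edg ps x)"
          using mem_int[OF g x i0] i0 by (cases x) auto
        then show "f_kv (theta_edges ps) p v (edg ps x) = (if x \<in> {(i0, j0 - 1), (i0, j0)} then 2 else p)"
          unfolding f_kv_def vv using degree_int[OF g i0] by auto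
      qed
    qed
  qed
  then show ?thesis unfolding strongly_edge_orientable_def ps_def .
qed



end
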